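(* For every smooth projective fan $\mathcal F$ in $V$, the cohomology of the differential graded algebra $(D_{\mathcal F},d)$ is $H^0(D_{\mathcal F},d)=\mathbb Q$ and $H^i(D_{\mathcal F},d)=0$ for all $i>0$.
   Context: $T$ is a complex algebraic torus of dimension $n$, $X_*(T)$ its cocharacter lattice, $V=X_*(T)\otimes\mathbb R$. $\mathcal F$ is a smooth projective rational fan in $V$ with set of vertices (primitive ray generators) $\Gamma_{\mathcal F}$. $D_{\mathcal F}$ is the quotient of the graded-commutative algebra $\mathbb Q[x_c]_{c\in\Gamma_{\mathcal F}}\otimes\bigwedge(\tau_c)_{c\in\Gamma_{\mathcal F}}$ (with $\deg x_c=2$, $\deg\tau_c=1$) by the ideal $\mathcal J_{\mathcal F}$ generated by all monomials $x_{c_{i_1}}\cdots x_{c_{i_h}}\tau_{c_{j_1}}\cdots\tau_{c_{j_k}}$ such that the vertices $c_{i_1},\dots,c_{i_h},c_{j_1},\dots,c_{j_k}$ do not span a cone of $\mathcal F$. The differential $d$ is the unique (graded) derivation of degree $1$ with $d(x_c)=0$, $d(\tau_c)=x_c$; it preserves $\mathcal J_{\mathcal F}$. *)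

theory Defs
  imports "HOL-Analysis.Analysis" "HOL-Library.Poly_Mapping"
begin

section \<open>Fans in V = X_*(T) \<otimes> R, identified with real^'n, X_*(T) with Z^n\<close>

definition lattice :: "(real^'n) set" where
  "lattice = {v. \<forall>i. v $ i \<in> \<int>}"

definition cone_gen :: "(real^'n) set \<Rightarrow> (real^'n) set" where
  "cone_gen S = {y. \<exists>a. (\<forall>c\<in>S. 0 \<le> a c) \<and> y = (\<Sum>c\<in>S. a c *\<^sub>R c)}"

definition rat_cone :: "(real^'n) set \<Rightarrow> bool" where
  "rat_cone \<sigma> \<longleftrightarrow> (\<exists>S. finite S \<and> S \<subseteq> lattice \<and> \<sigma> = cone_gen S) \<and> \<sigma> \<inter> uminus ` \<sigma> = {0}"

definition is_fan :: "(real^'n) set set \<Rightarrow> bool" where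
  "is_fan F \<longleftrightarrow> finite F \<and> (\<forall>\<sigma>\<in>F. rat_cone \<sigma>)
     \<and> (\<forall>\<sigma>\<in>F. \<forall>\<tau>. \<tau> face_of \<sigma> \<and> \<tau> \<noteq> {} \<longrightarrow> \<tau> \<in> F)
     \<and> (\<forall>\<sigma>\<in>F. \<forall>\<tau>\<in>F. (\<sigma> \<inter> \<tau>) face_of \<sigma> \<and> (\<sigma> \<inter> \<tau>) face_of \<tau>)"

definition lattice_basis :: "(real^'n) set \<Rightarrow> bool" where
  "lattice_basis E \<longleftrightarrow> finite E \<and> E \<subseteq> lattice \<and> card E = CARD('n) \<and>
     (\<forall>v\<in>lattice. \<exists>k::real^'n \<Rightarrow> int. v = (\<Sum>e\<in>E. of_int (k e) *\<^sub>R e))"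

definition smooth_fan :: "(real^'n) set set \<Rightarrow> bool" where
  "smooth_fan F \<longleftrightarrow> is_fan F \<and>
     (\<forall>\<sigma>\<in>F. \<exists>B E. B \<subseteq> E \<and> lattice_basis E \<and> \<sigma> = cone_gen B)"

definition complete_fan :: "(real^'n) set set \<Rightarrow> bool" where
  "complete_fan F \<longleftrightarrow> is_fan F \<and> \<Union>F = UNIV"

text \<open>Projective: complete, and admitting a strictly convex (integral) support function
  h(v) = max over maximal cones tau of (m tau \<bullet> v), which equals m sigma \<bullet> v exactly on sigma.\<close>
definition projective_fan :: "(real^'n) set set \<Rightarrow> bool" where
  "projective_fan F \<longleftrightarrow> complete_fan F \<and>
     (\<exists>m :: (real^'n) set \<Rightarrow> real^'n. (\<forall>\<sigma>\<in>F. m \<sigma> \<in> lattice) \<and>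
        (\<forall>\<sigma>\<in>F. \<forall>\<tau>\<in>F. interior \<sigma> \<noteq> {} \<and> interior \<tau> \<noteq> {} \<longrightarrow>
           (\<forall>v\<in>\<sigma>. m \<tau> \<bullet> v \<le> m \<sigma> \<bullet> v \<and> (v \<notin> \<tau> \<longrightarrow> m \<tau> \<bullet> v < m \<sigma> \<bullet> v))))"

definition vertices :: "(real^'n) set set \<Rightarrow> (real^'n) set" where
  "vertices F = {c. c \<in> lattice \<and> c \<noteq> 0 \<and> cone_gen {c} \<in> F \<and>
                    (\<forall>t::real. 0 < t \<and> t < 1 \<longrightarrow> t *\<^sub>R c \<notin> lattice)}"

section \<open>The graded-commutative algebra Q[x_c] \<otimes> \<Lambda>(tau_c) and the dga D\<close>

text \<open>A monomial x^alpha tau_S is encoded as (alpha, S); an element is a finitely supported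
  Q-linear combination of such monomials. The exterior monomial tau_S means the product of
  the tau_c, c in S, in increasing order with respect to a fixed ranking r (injective on Gamma).\<close>

type_synonym 'v mono = "('v \<Rightarrow>\<^sub>0 nat) \<times> 'v set"
type_synonym 'v elt = "'v mono \<Rightarrow>\<^sub>0 rat"

definition mono_ok :: "'v set \<Rightarrow> 'v mono \<Rightarrow> bool" where
  "mono_ok \<Gamma> m \<longleftrightarrow> Poly_Mapping.keys (fst m) \<subseteq> \<Gamma> \<and> snd m \<subseteq> \<Gamma>"

definition Aset :: "'v set \<Rightarrow> 'v elt set" where
  "Aset \<Gamma> = {p. \<forall>m\<in>Poly_Mapping.keys p. mono_ok \<Gamma> m}"

definition mdeg :: "'v mono \<Rightarrow> nat" where
  "mdeg m = 2 * (\<Sum>c\<in>Poly_Mapping.keys (fst m). Poly_Mapping.lookup (fst m) c) + card (snd m)"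

definition Ahom :: "'v set \<Rightarrow> nat \<Rightarrow> 'v elt set" where
  "Ahom \<Gamma> i = {p \<in> Aset \<Gamma>. \<forall>m\<in>Poly_Mapping.keys p. mdeg m = i}"

definition ext_sign :: "('v \<Rightarrow> nat) \<Rightarrow> 'v set \<Rightarrow> 'v set \<Rightarrow> rat" where
  "ext_sign r S T = (if S \<inter> T = {} then (-1) ^ card {(s,t). s \<in> S \<and> t \<in> T \<and> r t < r s} else 0)"

definition mono_mult :: "('v \<Rightarrow> nat) \<Rightarrow> 'v mono \<Rightarrow> 'v mono \<Rightarrow> 'v elt" where
  "mono_mult r m n = Poly_Mapping.single (fst m + fst n, snd m \<union> snd n) (ext_sign r (snd m) (snd n))"

definition scal :: "rat \<Rightarrow> 'v elt \<Rightarrow> 'v elt" where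
  "scal q p = Poly_Mapping.map (\<lambda>v. q * v) p"

definition elt_mult :: "('v \<Rightarrow> nat) \<Rightarrow> 'v elt \<Rightarrow> 'v elt \<Rightarrow> 'v elt" where
  "elt_mult r p q = (\<Sum>m\<in>Poly_Mapping.keys p. \<Sum>n\<in>Poly_Mapping.keys q. scal (Poly_Mapping.lookup p m * Poly_Mapping.lookup q n) (mono_mult r m n))"

definition unit_elt :: "'v elt" where
  "unit_elt = Poly_Mapping.single (0, {}) 1"

inductive_set ideal_gen :: "'v set \<Rightarrow> ('v \<Rightarrow> nat) \<Rightarrow> 'v elt set \<Rightarrow> 'v elt set"
  for \<Gamma> r G where
  gen: "g \<in> G \<Longrightarrow> g \<in> ideal_gen \<Gamma> r G"
| zero: "0 \<in> ideal_gen \<Gamma> r G"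
| add: "p \<in> ideal_gen \<Gamma> r G \<Longrightarrow> q \<in> ideal_gen \<Gamma> r G \<Longrightarrow> p + q \<in> ideal_gen \<Gamma> r G"
| lmult: "a \<in> Aset \<Gamma> \<Longrightarrow> p \<in> ideal_gen \<Gamma> r G \<Longrightarrow> elt_mult r a p \<in> ideal_gen \<Gamma> r G"
| rmult: "a \<in> Aset \<Gamma> \<Longrightarrow> p \<in> ideal_gen \<Gamma> r G \<Longrightarrow> elt_mult r p a \<in> ideal_gen \<Gamma> r G"

text \<open>Generators of J: monomials x_{c_i1}..x_{c_ih} tau_{c_j1}..tau_{c_jk} (up to sign) whose
  vertices do not span a cone, i.e. whose set of vertices does not satisfy the predicate face.\<close>
definition bad_monos :: "'v set \<Rightarrow> ('v set \<Rightarrow> bool) \<Rightarrow> 'v elt set" where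
  "bad_monos \<Gamma> face = {Poly_Mapping.single m 1 | m. mono_ok \<Gamma> m \<and> \<not> face (Poly_Mapping.keys (fst m) \<union> snd m)}"

definition Jideal :: "'v set \<Rightarrow> ('v \<Rightarrow> nat) \<Rightarrow> ('v set \<Rightarrow> bool) \<Rightarrow> 'v elt set" where
  "Jideal \<Gamma> r face = ideal_gen \<Gamma> r (bad_monos \<Gamma> face)"

text \<open>The derivation d with d x_c = 0, d tau_c = x_c, written out on monomials:
  d(x^a tau_{s_1} ... tau_{s_k}) = sum_j (-1)^(j-1) x^a x_{s_j} tau_{s_1}..(omit s_j)..tau_{s_k}.\<close>
definition d_mono :: "('v \<Rightarrow> nat) \<Rightarrow> 'v mono \<Rightarrow> 'v elt" where
  "d_mono r m = (\<Sum>c\<in>snd m. Poly_Mapping.single (fst m + Poly_Mapping.single c 1, snd m - {c})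
                     ((-1) ^ card {s \<in> snd m. r s < r c}))"

definition dd :: "('v \<Rightarrow> nat) \<Rightarrow> 'v elt \<Rightarrow> 'v elt" where
  "dd r p = (\<Sum>m\<in>Poly_Mapping.keys p. scal (Poly_Mapping.lookup p m) (d_mono r m))"

text \<open>Cocycles and coboundaries of the quotient complex D = A/J in degree i,
  expressed through representatives in A.\<close>
definition cocycles :: "'v set \<Rightarrow> ('v \<Rightarrow> nat) \<Rightarrow> ('v set \<Rightarrow> bool) \<Rightarrow> nat \<Rightarrow> 'v elt set" where
  "cocycles \<Gamma> r face i = {a \<in> Ahom \<Gamma> i. dd r a \<in> Jideal \<Gamma> r face}"

definition coboundaries :: "'v set \<Rightarrow> ('v \<Rightarrow> nat) \<Rightarrow> ('v set \<Rightarrow> bool) \<Rightarrow> nat \<Rightarrow> 'v elt set" where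
  "coboundaries \<Gamma> r face i = {a \<in> Ahom \<Gamma> i.
      (\<exists>b. (i > 0 \<and> b \<in> Ahom \<Gamma> (i - 1) \<or> b = 0) \<and> a - dd r b \<in> Jideal \<Gamma> r face)}"

definition fan_rank :: "(real^'n) set set \<Rightarrow> real^'n \<Rightarrow> nat" where
  "fan_rank F = (SOME r. inj_on r (vertices F))"

definition fan_face :: "(real^'n) set set \<Rightarrow> (real^'n) set \<Rightarrow> bool" where
  "fan_face F I \<longleftrightarrow> cone_gen I \<in> F"

abbreviation "DF_cocycles F i \<equiv> cocycles (vertices F) (fan_rank F) (fan_face F) i"
abbreviation "DF_coboundaries F i \<equiv> coboundaries (vertices F) (fan_rank F) (fan_face F) i"

end

theory Submission
  imports Defs
begin

lemma lookup_scal[simp]: "Poly_Mapping.lookup (scal q p) k = q * Poly_Mapping.lookup p k"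
  by (simp add: scal_def Poly_Mapping.map.rep_eq when_def)

lemma scal_0[simp]: "scal 0 p = 0" and scal_1[simp]: "scal 1 p = p"
  and scal_zero[simp]: "scal q 0 = 0"
  by (auto intro!: poly_mapping_eqI)

lemma scal_add: "scal q (p + p') = scal q p + scal q p'"
  and scal_add2: "scal (q + q') p = scal q p + scal q' p"
  and scal_scal: "scal q (scal q' p) = scal (q * q') p"
  and scal_single: "scal q (Poly_Mapping.single k v) = Poly_Mapping.single k (q * v)"
  by (auto intro!: poly_mapping_eqI simp: lookup_add algebra_simps lookup_single when_def)

lemma scal_sum: "scal q (sum f A) = sum (\<lambda>x. scal q (f x)) A"
  by (induction A rule: infinite_finite_induct) (auto simp: scal_add)

lemma keys_scal: "Poly_Mapping.keys (scal q p) \<subseteq> Poly_Mapping.keys p"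
  by (auto simp: in_keys_iff)

lemma keys_sum_sub: "Poly_Mapping.keys (sum f A) \<subseteq> (\<Union>x\<in>A. Poly_Mapping.keys (f x))"
proof (induction A rule: infinite_finite_induct)
  case (insert x F)
  then show ?case using keys_add[of "f x" "sum f F"] by auto
qed auto

lemma expansion: "p = (\<Sum>m\<in>Poly_Mapping.keys p. Poly_Mapping.single m (Poly_Mapping.lookup p m))"
  by (rule poly_mapping_eqI) (auto simp: lookup_sum lookup_single when_def in_keys_iff)

definition lin :: "('v mono \<Rightarrow> 'v elt) \<Rightarrow> 'v elt \<Rightarrow> 'v elt" where
  "lin f p = (\<Sum>m\<in>Poly_Mapping.keys p. scal (Poly_Mapping.lookup p m) (f m))"

lemma lin_gen: "finite K \<Longrightarrow> Poly_Mapping.keys p \<subseteq> K \<Longrightarrow>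
  lin f p = (\<Sum>m\<in>K. scal (Poly_Mapping.lookup p m) (f m))"
  unfolding lin_def by (rule sum.mono_neutral_left) (auto simp: in_keys_iff)

lemma lin_add: "lin f (p + q) = lin f p + lin f q"
proof -
  let ?K = "Poly_Mapping.keys p \<union> Poly_Mapping.keys q"
  have "lin f (p+q) = (\<Sum>m\<in>?K. scal (Poly_Mapping.lookup (p+q) m) (f m))"
    using keys_add[of p q] by (intro lin_gen) auto
  also have "\<dots> = (\<Sum>m\<in>?K. scal (Poly_Mapping.lookup p m) (f m)) + (\<Sum>m\<in>?K. scal (Poly_Mapping.lookup q m) (f m))"
    by (simp add: lookup_add scal_add2 sum.distrib)
  also have "\<dots> = lin f p + lin f q" by (subst (1 2) lin_gen[symmetric]) auto
  finally show ?thesis .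
qed

lemma lin_zero[simp]: "lin f 0 = 0" by (simp add: lin_def)

lemma lin_single[simp]: "lin f (Poly_Mapping.single k v) = scal v (f k)"
  by (simp add: lin_def)

lemma lin_sum: "lin f (sum g A) = (\<Sum>x\<in>A. lin f (g x))"
  by (induction A rule: infinite_finite_induct) (auto simp: lin_add)

lemma lin_scal: "lin f (scal q p) = scal q (lin f p)"
proof -
  have "lin f (scal q p) = (\<Sum>m\<in>Poly_Mapping.keys p. scal (q * Poly_Mapping.lookup p m) (f m))"
    by (subst lin_gen[where K="Poly_Mapping.keys p"]) (auto simp: keys_scal[THEN subsetD])
  then show ?thesis by (simp add: lin_def scal_sum scal_scal)
qed

lemma lin_diff: "lin f (p - q) = lin f p - lin f q"
  using lin_add[of f "p - q" q] by (simp add: algebra_simps)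

lemma keys_lin: "Poly_Mapping.keys (lin f p) \<subseteq> (\<Union>m\<in>Poly_Mapping.keys p. Poly_Mapping.keys (f m))"
  unfolding lin_def using keys_sum_sub keys_scal by fastforce

lemma lin_cong: "(\<And>m. m \<in> Poly_Mapping.keys p \<Longrightarrow> f m = g m) \<Longrightarrow> lin f p = lin g p"
  by (simp add: lin_def)

lemma lin_id: "(\<And>m. m \<in> Poly_Mapping.keys p \<Longrightarrow> f m = Poly_Mapping.single m 1) \<Longrightarrow> lin f p = p"
  apply (simp add: lin_def scal_single)
  by (metis expansion)

lemma dd_lin: "dd r = lin (d_mono r)"
  by (simp add: fun_eq_iff dd_def lin_def)


definition supp :: "'v mono \<Rightarrow> 'v set" where
  "supp m = Poly_Mapping.keys (fst m) \<union> snd m"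

definition bad :: "('v set \<Rightarrow> bool) \<Rightarrow> 'v mono \<Rightarrow> bool" where
  "bad face m \<longleftrightarrow> (\<exists>B\<subseteq>supp m. \<not> face B)"

lemma keys_add_nat: "Poly_Mapping.keys (a + b :: 'v \<Rightarrow>\<^sub>0 nat) = Poly_Mapping.keys a \<union> Poly_Mapping.keys b"
  by (auto simp: in_keys_iff lookup_add)

lemma mono_ok_supp: "mono_ok \<Gamma> m \<longleftrightarrow> supp m \<subseteq> \<Gamma>"
  by (auto simp: mono_ok_def supp_def)

lemma keys_mono_mult: "Poly_Mapping.keys (mono_mult r m n) \<subseteq> {(fst m + fst n, snd m \<union> snd n)}"
  by (simp add: mono_mult_def)

lemma keys_elt_mult: "Poly_Mapping.keys (elt_mult r p q) \<subseteq>
   {(fst m + fst n, snd m \<union> snd n) | m n. m \<in> Poly_Mapping.keys p \<and> n \<in> Poly_Mapping.keys q}"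
proof
  fix k assume "k \<in> Poly_Mapping.keys (elt_mult r p q)"
  then have "k \<in> (\<Union>m\<in>Poly_Mapping.keys p. Poly_Mapping.keys (\<Sum>n\<in>Poly_Mapping.keys q. scal (Poly_Mapping.lookup p m * Poly_Mapping.lookup q n) (mono_mult r m n)))"
    unfolding elt_mult_def by (rule subsetD[OF keys_sum_sub])
  then obtain m where m: "m \<in> Poly_Mapping.keys p" and
    "k \<in> Poly_Mapping.keys (\<Sum>n\<in>Poly_Mapping.keys q. scal (Poly_Mapping.lookup p m * Poly_Mapping.lookup q n) (mono_mult r m n))"
    by (rule UN_E)
  from this(2) have "k \<in> (\<Union>n\<in>Poly_Mapping.keys q. Poly_Mapping.keys (scal (Poly_Mapping.lookup p m * Poly_Mapping.lookup q n) (mono_mult r m n)))"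
    by (rule subsetD[OF keys_sum_sub])
  then obtain n where n: "n \<in> Poly_Mapping.keys q" and
    k: "k \<in> Poly_Mapping.keys (scal (Poly_Mapping.lookup p m * Poly_Mapping.lookup q n) (mono_mult r m n))"
    by (rule UN_E)
  have "k \<in> Poly_Mapping.keys (mono_mult r m n)" using k by (rule subsetD[OF keys_scal])
  then have "k = (fst m + fst n, snd m \<union> snd n)" using keys_mono_mult by fastforce
  then show "k \<in> {(fst m + fst n, snd m \<union> snd n) | m n. m \<in> Poly_Mapping.keys p \<and> n \<in> Poly_Mapping.keys q}"
    using m n by blast
qed

lemma supp_prod: "supp (fst m + fst n, snd m \<union> snd n) = supp m \<union> supp n"
  by (auto simp: supp_def keys_add_nat)

lemma J_bad: "p \<in> Jideal \<Gamma> r face \<Longrightarrow> \<forall>m\<in>Poly_Mapping.keys p. bad face m"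
  unfolding Jideal_def
proof (induction rule: ideal_gen.induct)
  case (gen g)
  then show ?case by (auto simp: bad_monos_def bad_def supp_def)
next
  case zero
  then show ?case by simp
next
  case (add p q)
  then show ?case using keys_add[of p q] by blast
next
  case (lmult a p)
  show ?case
  proof
    fix k assume "k \<in> Poly_Mapping.keys (elt_mult r a p)"
    then obtain m n where "k = (fst m + fst n, snd m \<union> snd n)" "n \<in> Poly_Mapping.keys p"
      using keys_elt_mult by blast
    moreover have "bad face n" using lmult(3) \<open>n \<in> _\<close> by blast
    then obtain B where "B \<subseteq> supp n" "\<not> face B" unfolding bad_def by blast
    ultimately show "bad face k" unfolding bad_def by (intro exI[of _ B]) (simp add: supp_prod, blast)
  qed
next
  case (rmult a p)
  show ?case
  proof
    fix k assume "k \<in> Poly_Mapping.keys (elt_mult r p a)"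
    then obtain m n where "k = (fst m + fst n, snd m \<union> snd n)" "m \<in> Poly_Mapping.keys p"
      using keys_elt_mult by blast
    moreover have "bad face m" using rmult(3) \<open>m \<in> _\<close> by blast
    then obtain B where "B \<subseteq> supp m" "\<not> face B" unfolding bad_def by blast
    ultimately show "bad face k" unfolding bad_def by (intro exI[of _ B]) (simp add: supp_prod, blast)
  qed
qed

lemma elt_mult_single: "a \<noteq> 0 \<Longrightarrow> b \<noteq> 0 \<Longrightarrow>
  elt_mult r (Poly_Mapping.single m a) (Poly_Mapping.single n b) = scal (a*b) (mono_mult r m n)"
  by (simp add: elt_mult_def)

lemma single_bad_in_J:
  assumes ok: "mono_ok \<Gamma> m" and b: "bad face m" and fin: "finite (snd m)"
  shows "Poly_Mapping.single m q \<in> Jideal \<Gamma> r face"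
proof (cases "q = 0")
  case True
  then show ?thesis by (simp add: Jideal_def ideal_gen.zero)
next
  case qnz: False
  obtain \<alpha> S where m: "m = (\<alpha>, S)" by (cases m)
  obtain B where B: "B \<subseteq> supp m" "\<not> face B" using b bad_def by blast
  have finB: "finite B" using B(1) fin by (auto simp: supp_def m intro: finite_subset)
  define \<gamma> :: "_ \<Rightarrow>\<^sub>0 nat" where "\<gamma> = (\<Sum>c\<in>B - S. Poly_Mapping.single c 1)"
  have lg: "Poly_Mapping.lookup \<gamma> c = (if c \<in> B - S then 1 else 0)" for c
    using finB by (simp add: \<gamma>_def lookup_sum lookup_single when_def)
  have kg: "Poly_Mapping.keys \<gamma> = B - S" by (rule set_eqI) (simp add: in_keys_iff lg)
  define g where "g = (\<gamma>, B \<inter> S)"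
  have sg: "supp g = B" unfolding g_def supp_def fst_conv snd_conv kg by blast
  have okg: "mono_ok \<Gamma> g" using ok B(1) sg by (auto simp: mono_ok_supp)
  have "Poly_Mapping.keys \<gamma> \<union> (B \<inter> S) = B" using kg by blast
  then have nf: "\<not> face (Poly_Mapping.keys \<gamma> \<union> (B \<inter> S))" using B(2) by simp
  have okg': "mono_ok \<Gamma> (\<gamma>, B \<inter> S)" using okg by (simp add: g_def)
  have "Poly_Mapping.single g 1 \<in> bad_monos \<Gamma> face"
    unfolding bad_monos_def g_def using nf okg' by (intro CollectI exI[of _ "(\<gamma>, B \<inter> S)"]) simp
  then have gJ: "Poly_Mapping.single g 1 \<in> Jideal \<Gamma> r face"
    unfolding Jideal_def by (rule ideal_gen.gen)
  define n where "n = (\<alpha> - \<gamma>, S - B)"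
  have sum: "\<gamma> + (\<alpha> - \<gamma>) = \<alpha>"
  proof (rule poly_mapping_eqI)
    fix c
    have "c \<in> B - S \<Longrightarrow> Poly_Mapping.lookup \<alpha> c \<noteq> 0"
      using B(1) by (auto simp: supp_def m in_keys_iff)
    then show "Poly_Mapping.lookup (\<gamma> + (\<alpha> - \<gamma>)) c = Poly_Mapping.lookup \<alpha> c"
      by (auto simp: lookup_add lookup_minus lg)
  qed
  have kn: "Poly_Mapping.keys (\<alpha> - \<gamma>) \<subseteq> Poly_Mapping.keys \<alpha>"
    by (auto simp: in_keys_iff lookup_minus)
  define sg where "sg = ext_sign r (B \<inter> S) (S - B)"
  have dj: "B \<inter> S \<inter> (S - B) = {}" by blast
  have sgnz: "sg \<noteq> 0" by (simp add: sg_def ext_sign_def dj)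
  have nA: "Poly_Mapping.single n (q / sg) \<in> Aset \<Gamma>"
    using ok kn by (auto simp: Aset_def n_def mono_ok_def m)
  have "elt_mult r (Poly_Mapping.single g 1) (Poly_Mapping.single n (q/sg)) \<in> Jideal \<Gamma> r face"
    using gJ nA unfolding Jideal_def by (rule ideal_gen.rmult[rotated])
  moreover have "elt_mult r (Poly_Mapping.single g 1) (Poly_Mapping.single n (q/sg)) = Poly_Mapping.single m q"
  proof -
    have "(B \<inter> S) \<union> (S - B) = S" "B \<inter> S \<inter> (S - B) = {}" by auto
    then show ?thesis using qnz sgnz
      by (simp add: elt_mult_single mono_mult_def g_def n_def sum m scal_single sg_def)
  qed
  ultimately show ?thesis by simp
qed

lemma J_sum: "finite A \<Longrightarrow> (\<And>x. x \<in> A \<Longrightarrow> f x \<in> Jideal \<Gamma> r face) \<Longrightarrow> sum f A \<in> Jideal \<Gamma> r face"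
  by (induction A rule: finite_induct) (auto simp: Jideal_def intro: ideal_gen.zero ideal_gen.add)

lemma bad_in_J:
  assumes "\<And>m. m \<in> Poly_Mapping.keys p \<Longrightarrow> mono_ok \<Gamma> m \<and> bad face m \<and> finite (snd m)"
  shows "p \<in> Jideal \<Gamma> r face"
proof -
  have "(\<Sum>m\<in>Poly_Mapping.keys p. Poly_Mapping.single m (Poly_Mapping.lookup p m)) \<in> Jideal \<Gamma> r face"
  proof (rule J_sum)
    fix m assume "m \<in> Poly_Mapping.keys p"
    then have "mono_ok \<Gamma> m" "bad face m" "finite (snd m)" using assms by blast+
    then show "Poly_Mapping.single m (Poly_Mapping.lookup p m) \<in> Jideal \<Gamma> r face"
      by (rule single_bad_in_J)
  qed simp
  then show ?thesis by (subst expansion) 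
qed


definition cminS :: "('v \<Rightarrow> nat) \<Rightarrow> 'v set \<Rightarrow> 'v" where
  "cminS r A = (SOME c. c \<in> A \<and> (\<forall>t\<in>A. r c \<le> r t))"

abbreviation ec :: "'v \<Rightarrow> ('v \<Rightarrow>\<^sub>0 nat)" where "ec c \<equiv> Poly_Mapping.single c 1"

definition hmono :: "('v \<Rightarrow> nat) \<Rightarrow> 'v mono \<Rightarrow> 'v elt" where
  "hmono r m = (if cminS r (supp m) \<in> snd m then 0
     else Poly_Mapping.single (fst m - ec (cminS r (supp m)), insert (cminS r (supp m)) (snd m)) 1)"

lemma cminS: assumes "finite A" "A \<noteq> {}"
  shows "cminS r A \<in> A" "\<And>t. t \<in> A \<Longrightarrow> r (cminS r A) \<le> r t"
proof -
  obtain c where c: "c \<in> A" "\<forall>t\<in>A. r c \<le> r t"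
  proof -
    have "Min (r ` A) \<in> r ` A" using assms by simp
    then obtain c where "c \<in> A" "r c = Min (r ` A)" by auto
    then show ?thesis using assms by (intro that[of c]) auto
  qed
  have "cminS r A \<in> A \<and> (\<forall>t\<in>A. r (cminS r A) \<le> r t)"
    unfolding cminS_def by (rule someI[of _ c]) (use c in blast)
  then show "cminS r A \<in> A" "\<And>t. t \<in> A \<Longrightarrow> r (cminS r A) \<le> r t" by auto
qed

lemma keys_plus_ec: "Poly_Mapping.keys (\<alpha> + ec s) = insert s (Poly_Mapping.keys \<alpha>)"
  by (auto simp: keys_add_nat)

lemma keys_minus_ec: assumes "c \<in> Poly_Mapping.keys \<alpha>"
  shows "insert c (Poly_Mapping.keys (\<alpha> - ec c)) = Poly_Mapping.keys \<alpha>"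
  using assms by (auto simp: in_keys_iff lookup_minus lookup_single when_def split: if_splits)

lemma minus_plus_ec: assumes "c \<in> Poly_Mapping.keys \<alpha>"
  shows "\<alpha> - ec c + ec s = \<alpha> + ec s - ec c" "\<alpha> - ec c + ec c = \<alpha>"
  using assms by (auto intro!: poly_mapping_eqI simp: in_keys_iff lookup_minus lookup_add lookup_single when_def)

lemma lin_plus_fun: "lin (\<lambda>m. f m + g m) p = lin f p + lin g p"
  by (simp add: lin_def scal_add sum.distrib)

lemma lin_comp: "lin f (lin g p) = lin (\<lambda>m. lin f (g m)) p"
proof -
  have "lin f (lin g p) = (\<Sum>m\<in>Poly_Mapping.keys p. lin f (scal (Poly_Mapping.lookup p m) (g m)))"
    unfolding lin_def[of g] by (rule lin_sum)
  then show ?thesis by (simp add: lin_scal lin_def[of "\<lambda>m. lin f (g m)"])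
qed

lemma d_mono_sum: "d_mono r m = (\<Sum>c\<in>snd m. Poly_Mapping.single (fst m + ec c, snd m - {c})
                     ((-1) ^ card {s \<in> snd m. r s < r c}))"
  by (simp add: d_mono_def)

lemma homotopy_mono:
  assumes fin: "finite (snd m)" and ne: "supp m \<noteq> {}" and inj: "inj_on r (supp m)"
  shows "dd r (hmono r m) + lin (hmono r) (d_mono r m) = Poly_Mapping.single m 1"
proof -
  obtain \<alpha> S where m: "m = (\<alpha>, S)" by (cases m)
  define c where "c = cminS r (supp m)"
  have fs: "finite (supp m)" using fin by (simp add: supp_def)
  have cin: "c \<in> supp m" and cle: "\<And>t. t \<in> supp m \<Longrightarrow> r c \<le> r t"
    using cminS[OF fs ne] c_def by auto
  define \<sigma> where "\<sigma> s = ((-1::rat) ^ card {t \<in> S. r t < r s})" for s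
  have Ssub: "S \<subseteq> supp m" by (simp add: supp_def m)
  have sig_c: "card {t \<in> S. r t < r c} = 0"
    using cle Ssub fin by (auto simp: m intro!: card_eq_0_iff[THEN iffD2] simp del: card_0_eq) (meson not_le subsetD)
  have dm: "d_mono r m = (\<Sum>s\<in>S. Poly_Mapping.single (\<alpha> + ec s, S - {s}) (\<sigma> s))"
    by (simp add: d_mono_def m \<sigma>_def)
  have supp_d: "supp (\<alpha> + ec s, S - {s}) = supp m" if "s \<in> S" for s
    unfolding supp_def m fst_conv snd_conv keys_plus_ec using that by auto
  show ?thesis
  proof (cases "c \<in> S")
    case True
    have "cminS r (supp m) \<in> snd m" unfolding c_def[symmetric] using True by (simp add: m)
    then have h0: "hmono r m = 0" unfolding hmono_def by simp
    have "lin (hmono r) (d_mono r m) = (\<Sum>s\<in>S. scal (\<sigma> s) (hmono r (\<alpha> + ec s, S - {s})))"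
      by (simp add: dm lin_sum)
    also have "\<dots> = (\<Sum>s\<in>S. if s = c then Poly_Mapping.single m 1 else 0)"
    proof (rule sum.cong[OF refl])
      fix s assume s: "s \<in> S"
      have cs: "cminS r (supp (\<alpha> + ec s, S - {s})) = c" using supp_d[OF s] c_def by simp
      show "scal (\<sigma> s) (hmono r (\<alpha> + ec s, S - {s})) = (if s = c then Poly_Mapping.single m 1 else 0)"
      proof (cases "s = c")
        case True
        have "\<sigma> s = 1" using sig_c True by (simp add: \<sigma>_def)
        moreover have "insert c (S - {c}) = S" using \<open>c \<in> S\<close> by auto
        moreover have "\<alpha> + ec c - ec c = \<alpha>" by (rule poly_mapping_eqI) (simp add: lookup_add lookup_minus)
        ultimately show ?thesis using True unfolding hmono_def cs by (simp add: m scal_single)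
      next
        case False
        then show ?thesis using \<open>c \<in> S\<close> unfolding hmono_def cs by simp
      qed
    qed
    also have "\<dots> = Poly_Mapping.single m 1" using True fin by (simp add: m)
    finally show ?thesis by (simp add: h0 dd_lin)
  next
    case False
    have ca: "c \<in> Poly_Mapping.keys \<alpha>" using False cin by (simp add: supp_def m)
    define S' where "S' = insert c S"
    define \<sigma>' where "\<sigma>' s = ((-1::rat) ^ card {t \<in> S'. r t < r s})" for s
    have "cminS r (supp m) \<notin> snd m" unfolding c_def[symmetric] using False by (simp add: m)
    then have hm: "hmono r m = Poly_Mapping.single (\<alpha> - ec c, S') 1"
      unfolding hmono_def c_def[symmetric] by (simp add: m S'_def)
    have "dd r (hmono r m) = d_mono r (\<alpha> - ec c, S')" by (simp add: hm dd_lin)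
    also have "\<dots> = (\<Sum>s\<in>S'. Poly_Mapping.single (\<alpha> - ec c + ec s, S' - {s}) (\<sigma>' s))"
      by (simp add: d_mono_def \<sigma>'_def)
    also have "\<dots> = Poly_Mapping.single (\<alpha> - ec c + ec c, S' - {c}) (\<sigma>' c)
        + (\<Sum>s\<in>S. Poly_Mapping.single (\<alpha> - ec c + ec s, S' - {s}) (\<sigma>' s))"
      using False fin by (simp add: S'_def m)
    also have "\<dots> = Poly_Mapping.single m 1
        + (\<Sum>s\<in>S. Poly_Mapping.single (\<alpha> + ec s - ec c, insert c (S - {s})) (- \<sigma> s))"
    proof -
      have "S' - {c} = S" using False by (auto simp: S'_def)
      moreover have "\<sigma>' c = 1"
      proof -
        have e0: "{t \<in> S'. r t < r c} = {}" using cle Ssub cin by (auto simp: S'_def) (meson not_le subsetD)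
        show ?thesis unfolding \<sigma>'_def e0 by simp
      qed
      moreover have "Poly_Mapping.single (\<alpha> - ec c + ec s, S' - {s}) (\<sigma>' s)
          = Poly_Mapping.single (\<alpha> + ec s - ec c, insert c (S - {s})) (- \<sigma> s)" if s: "s \<in> S" for s
      proof -
        have sc: "s \<noteq> c" using s False by auto
        have rcs: "r c < r s"
        proof -
          have "r c \<le> r s" using cle Ssub s by auto
          moreover have "s \<in> supp m" using s Ssub by blast
          then have "r c \<noteq> r s" using inj_onD[OF inj _ cin] sc by metis
          ultimately show ?thesis by simp
        qed
        have "{t \<in> S'. r t < r s} = insert c {t \<in> S. r t < r s}" using rcs by (auto simp: S'_def)
        moreover have "c \<notin> {t \<in> S. r t < r s}" using False by simp
        moreover have "finite {t \<in> S. r t < r s}" using fin by (simp add: m)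
        ultimately have "\<sigma>' s = - \<sigma> s" by (simp add: \<sigma>'_def \<sigma>_def)
        moreover have "S' - {s} = insert c (S - {s})" using sc by (auto simp: S'_def)
        ultimately show ?thesis using minus_plus_ec(1)[OF ca] by simp
      qed
      ultimately show ?thesis using minus_plus_ec(2)[OF ca] by (simp add: m)
    qed
    finally have e1: "dd r (hmono r m) = Poly_Mapping.single m 1
        + (\<Sum>s\<in>S. Poly_Mapping.single (\<alpha> + ec s - ec c, insert c (S - {s})) (- \<sigma> s))" .
    have "lin (hmono r) (d_mono r m) = (\<Sum>s\<in>S. scal (\<sigma> s) (hmono r (\<alpha> + ec s, S - {s})))"
      by (simp add: dm lin_sum)
    also have "\<dots> = (\<Sum>s\<in>S. Poly_Mapping.single (\<alpha> + ec s - ec c, insert c (S - {s})) (\<sigma> s))"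
    proof (rule sum.cong[OF refl])
      fix s assume s: "s \<in> S"
      have cs: "cminS r (supp (\<alpha> + ec s, S - {s})) = c" using supp_d[OF s] c_def by simp
      show "scal (\<sigma> s) (hmono r (\<alpha> + ec s, S - {s})) = Poly_Mapping.single (\<alpha> + ec s - ec c, insert c (S - {s})) (\<sigma> s)"
        using False unfolding hmono_def cs by (simp add: scal_single)
    qed
    finally have e2: "lin (hmono r) (d_mono r m) = (\<Sum>s\<in>S. Poly_Mapping.single (\<alpha> + ec s - ec c, insert c (S - {s})) (\<sigma> s))" .
    have "(\<Sum>s\<in>S. Poly_Mapping.single (\<alpha> + ec s - ec c, insert c (S - {s})) (- \<sigma> s))
        + (\<Sum>s\<in>S. Poly_Mapping.single (\<alpha> + ec s - ec c, insert c (S - {s})) (\<sigma> s)) = 0"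
      by (simp add: sum.distrib[symmetric] single_uminus)
    then show ?thesis using e1 e2 by (simp add: add.assoc)
  qed
qed


definition degp :: "('v \<Rightarrow>\<^sub>0 nat) \<Rightarrow> nat" where
  "degp \<alpha> = (\<Sum>c\<in>Poly_Mapping.keys \<alpha>. Poly_Mapping.lookup \<alpha> c)"

lemma mdeg_degp: "mdeg m = 2 * degp (fst m) + card (snd m)"
  by (simp add: mdeg_def degp_def)

lemma degp_minus: assumes c: "c \<in> Poly_Mapping.keys \<alpha>"
  shows "degp (\<alpha> - ec c) + 1 = degp \<alpha>"
proof -
  let ?K = "Poly_Mapping.keys \<alpha>"
  have sub: "Poly_Mapping.keys (\<alpha> - ec c) \<subseteq> ?K" by (auto simp: in_keys_iff lookup_minus)
  have "degp (\<alpha> - ec c) = (\<Sum>x\<in>?K. Poly_Mapping.lookup (\<alpha> - ec c) x)"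
    unfolding degp_def by (rule sum.mono_neutral_left) (use sub in \<open>auto simp: in_keys_iff\<close>)
  also have "\<dots> = Poly_Mapping.lookup (\<alpha> - ec c) c + (\<Sum>x\<in>?K - {c}. Poly_Mapping.lookup (\<alpha> - ec c) x)"
    using c by (simp add: sum.remove)
  also have "(\<Sum>x\<in>?K - {c}. Poly_Mapping.lookup (\<alpha> - ec c) x) = (\<Sum>x\<in>?K - {c}. Poly_Mapping.lookup \<alpha> x)"
    by (rule sum.cong) (auto simp: lookup_minus lookup_single)
  finally have "degp (\<alpha> - ec c) + 1 = (Poly_Mapping.lookup \<alpha> c - 1 + 1) + (\<Sum>x\<in>?K - {c}. Poly_Mapping.lookup \<alpha> x)"
    by (simp add: lookup_minus)
  also have "Poly_Mapping.lookup \<alpha> c - 1 + 1 = Poly_Mapping.lookup \<alpha> c" using c by (simp add: in_keys_iff)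
  also have "\<dots> + (\<Sum>x\<in>?K - {c}. Poly_Mapping.lookup \<alpha> x) = degp \<alpha>"
    unfolding degp_def using c by (simp add: sum.remove)
  finally show ?thesis .
qed

lemma keys_d_mono: "k \<in> Poly_Mapping.keys (d_mono r m) \<Longrightarrow> supp k = supp m"
proof -
  assume "k \<in> Poly_Mapping.keys (d_mono r m)"
  then obtain s where s: "s \<in> snd m" and
    "k \<in> Poly_Mapping.keys (Poly_Mapping.single (fst m + ec s, snd m - {s}) ((-1::rat) ^ card {t \<in> snd m. r t < r s}))"
    unfolding d_mono_def by (auto dest: subsetD[OF keys_sum_sub])
  then have kk: "k = (fst m + ec s, snd m - {s})" by (simp split: if_splits)
  show ?thesis using s unfolding supp_def kk fst_conv snd_conv keys_plus_ec by auto
qed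

lemma keys_hmono:
  assumes "k \<in> Poly_Mapping.keys (hmono r m)" "finite (supp m)" "supp m \<noteq> {}"
  shows "supp k = supp m" "mdeg k + 1 = mdeg m" "finite (snd m) \<Longrightarrow> True"
proof -
  define c where "c = cminS r (supp m)"
  have cin: "c \<in> supp m" using cminS[OF assms(2,3)] c_def by auto
  have nc: "c \<notin> snd m" and k: "k = (fst m - ec c, insert c (snd m))"
    using assms(1) unfolding hmono_def c_def[symmetric] by (auto split: if_splits)
  have ca: "c \<in> Poly_Mapping.keys (fst m)" using cin nc by (simp add: supp_def)
  show "supp k = supp m" unfolding k supp_def fst_conv snd_conv
    using keys_minus_ec[OF ca] by auto
  have fs: "finite (snd m)" using assms(2) by (simp add: supp_def)
  show "mdeg k + 1 = mdeg m" unfolding k mdeg_degp fst_conv snd_conv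
    using degp_minus[OF ca] fs nc by simp
  show "finite (snd m) \<Longrightarrow> True" by simp
qed

lemma homotopy:
  assumes "\<And>m. m \<in> Poly_Mapping.keys a \<Longrightarrow> finite (snd m) \<and> supp m \<noteq> {} \<and> inj_on r (supp m)"
  shows "dd r (lin (hmono r) a) + lin (hmono r) (dd r a) = a"
proof -
  have "dd r (lin (hmono r) a) + lin (hmono r) (dd r a)
      = lin (\<lambda>m. dd r (hmono r m) + lin (hmono r) (d_mono r m)) a"
    by (simp add: dd_lin lin_comp lin_plus_fun)
  also have "\<dots> = a"
    by (rule lin_id) (use assms homotopy_mono in blast)
  finally show ?thesis .
qed

lemma main_generic:
  fixes \<Gamma> :: "'v set" and r :: "'v \<Rightarrow> nat"
  assumes fin: "finite \<Gamma>" and inj: "inj_on r \<Gamma>" and f0: "face {}"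
  shows "unit_elt \<in> cocycles \<Gamma> r face 0 \<and> unit_elt \<notin> coboundaries \<Gamma> r face 0
         \<and> (\<forall>a\<in>cocycles \<Gamma> r face 0. \<exists>q::rat. a - scal q unit_elt \<in> coboundaries \<Gamma> r face 0)
         \<and> (\<forall>i>0. cocycles \<Gamma> r face i \<subseteq> coboundaries \<Gamma> r face i)"
proof (intro conjI allI impI)
  have J0: "0 \<in> Jideal \<Gamma> r face" by (simp add: Jideal_def ideal_gen.zero)
  have dd0: "dd r 0 = 0" by (simp add: dd_lin)
  have uA: "unit_elt \<in> Ahom \<Gamma> 0"
    by (simp add: unit_elt_def Ahom_def Aset_def mono_ok_def mdeg_def)
  have "dd r unit_elt = 0" by (simp add: unit_elt_def dd_lin d_mono_def)
  then show "unit_elt \<in> cocycles \<Gamma> r face 0" using uA J0 by (simp add: cocycles_def)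
  show "unit_elt \<notin> coboundaries \<Gamma> r face 0"
  proof
    assume "unit_elt \<in> coboundaries \<Gamma> r face 0"
    then have "unit_elt \<in> Jideal \<Gamma> r face" by (auto simp: coboundaries_def dd0)
    then have "bad face (0, {})" using J_bad by (fastforce simp: unit_elt_def)
    then show False using f0 by (simp add: bad_def supp_def)
  qed
  have c0: "0 \<in> coboundaries \<Gamma> r face 0"
    using J0 by (auto simp: coboundaries_def Ahom_def Aset_def dd0)
  show "\<forall>a\<in>cocycles \<Gamma> r face 0. \<exists>q::rat. a - scal q unit_elt \<in> coboundaries \<Gamma> r face 0"
  proof
    fix a assume "a \<in> cocycles \<Gamma> r face 0"
    then have aA: "a \<in> Ahom \<Gamma> 0" by (simp add: cocycles_def)
    have keys0: "m = (0, {})" if m: "m \<in> Poly_Mapping.keys a" for m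
    proof -
      have ok: "mono_ok \<Gamma> m" and d: "mdeg m = 0" using aA m by (auto simp: Ahom_def Aset_def)
      have "finite (snd m)" using ok fin by (auto simp: mono_ok_def intro: finite_subset)
      then have "snd m = {}" using d by (simp add: mdeg_def)
      moreover have "fst m = 0"
      proof -
        have "\<forall>c\<in>Poly_Mapping.keys (fst m). Poly_Mapping.lookup (fst m) c = 0" using d by (simp add: mdeg_def)
        then have "\<And>c. Poly_Mapping.lookup (fst m) c = 0" by (metis not_in_keys_iff_lookup_eq_zero)
        then show ?thesis by (intro poly_mapping_eqI) simp
      qed
      ultimately show ?thesis by (cases m) simp
    qed
    define q where "q = Poly_Mapping.lookup a (0, {})"
    have "a = scal q unit_elt"
    proof (rule poly_mapping_eqI)
      fix k show "Poly_Mapping.lookup a k = Poly_Mapping.lookup (scal q unit_elt) k"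
        using keys0[of k] by (cases "k = (0, {})") (auto simp: q_def unit_elt_def lookup_single in_keys_iff)
    qed
    then show "\<exists>q::rat. a - scal q unit_elt \<in> coboundaries \<Gamma> r face 0" using c0 by (intro exI[of _ q]) simp
  qed
  fix i :: nat assume i: "i > 0"
  show "cocycles \<Gamma> r face i \<subseteq> coboundaries \<Gamma> r face i"
  proof
    fix a assume "a \<in> cocycles \<Gamma> r face i"
    then have aA: "a \<in> Ahom \<Gamma> i" and daJ: "dd r a \<in> Jideal \<Gamma> r face" by (auto simp: cocycles_def)
    have props: "mono_ok \<Gamma> m \<and> mdeg m = i \<and> finite (snd m) \<and> finite (supp m) \<and> supp m \<noteq> {} \<and> inj_on r (supp m)"
      if m: "m \<in> Poly_Mapping.keys a" for m
    proof -
      have ok: "mono_ok \<Gamma> m" and d: "mdeg m = i" using aA m by (auto simp: Ahom_def Aset_def)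
      have ss: "supp m \<subseteq> \<Gamma>" using ok by (simp add: mono_ok_supp)
      have fs: "finite (supp m)" using ss fin by (rule finite_subset)
      have "supp m \<noteq> {}"
      proof
        assume "supp m = {}"
        then have "Poly_Mapping.keys (fst m) = {}" "snd m = {}" by (auto simp: supp_def)
        then have "mdeg m = 0" by (simp add: mdeg_def)
        then show False using d i by simp
      qed
      then show ?thesis using ok d fs ss inj by (auto simp: supp_def intro: inj_on_subset)
    qed
    define b where "b = lin (hmono r) a"
    have hom: "dd r b + lin (hmono r) (dd r a) = a"
      unfolding b_def by (rule homotopy) (use props in blast)
    have bA: "b \<in> Ahom \<Gamma> (i - 1)"
      unfolding Ahom_def Aset_def
    proof (intro CollectI conjI ballI)
      fix k assume "k \<in> Poly_Mapping.keys b"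
      then obtain m where m: "m \<in> Poly_Mapping.keys a" and k: "k \<in> Poly_Mapping.keys (hmono r m)"
        unfolding b_def using keys_lin by blast
      have "supp k = supp m" "mdeg k + 1 = mdeg m" using keys_hmono[OF k] props[OF m] by auto
      then show "mono_ok \<Gamma> k" "mdeg k = i - 1" using props[OF m] by (auto simp: mono_ok_supp)
    qed
    have "lin (hmono r) (dd r a) \<in> Jideal \<Gamma> r face"
    proof (rule bad_in_J)
      fix k assume "k \<in> Poly_Mapping.keys (lin (hmono r) (dd r a))"
      then obtain m' where m': "m' \<in> Poly_Mapping.keys (dd r a)" and k: "k \<in> Poly_Mapping.keys (hmono r m')"
        using keys_lin by blast
      obtain m where m: "m \<in> Poly_Mapping.keys a" and m'': "m' \<in> Poly_Mapping.keys (d_mono r m)"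
        using m' keys_lin unfolding dd_lin by blast
      have s1: "supp m' = supp m" by (rule keys_d_mono[OF m''])
      have s2: "supp k = supp m'" using keys_hmono(1)[OF k] s1 props[OF m] by simp
      have "bad face m'" using J_bad[OF daJ] m' by blast
      then have "bad face k" using s2 by (simp add: bad_def)
      moreover have "mono_ok \<Gamma> k" using s2 s1 props[OF m] by (simp add: mono_ok_supp)
      moreover have "finite (snd k)"
      proof (rule finite_subset)
        show "snd k \<subseteq> supp k" by (simp add: supp_def)
        show "finite (supp k)" using s2 s1 props[OF m] by simp
      qed
      ultimately show "mono_ok \<Gamma> k \<and> bad face k \<and> finite (snd k)" by blast
    qed
    moreover have "a - dd r b = lin (hmono r) (dd r a)" using hom by (simp add: algebra_simps)
    ultimately show "a \<in> coboundaries \<Gamma> r face i"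
      unfolding coboundaries_def using aA bA i by auto
  qed
qed


lemma cone_gen_single: "y \<in> cone_gen {c} \<longleftrightarrow> (\<exists>t\<ge>0. y = t *\<^sub>R c)"
proof
  assume "y \<in> cone_gen {c}"
  then obtain a where "0 \<le> a c" "y = a c *\<^sub>R c" by (auto simp: cone_gen_def)
  then show "\<exists>t\<ge>0. y = t *\<^sub>R c" by blast
next
  assume "\<exists>t\<ge>0. y = t *\<^sub>R c"
  then obtain t where "t \<ge> 0" "y = t *\<^sub>R c" by blast
  then show "y \<in> cone_gen {c}" unfolding cone_gen_def by (intro CollectI exI[of _ "\<lambda>_. t"]) simp
qed

lemma cone_gen_scale: assumes "y \<in> cone_gen S" "0 \<le> t" shows "t *\<^sub>R y \<in> cone_gen S"
proof -
  obtain a where a: "\<forall>c\<in>S. 0 \<le> a c" "y = (\<Sum>c\<in>S. a c *\<^sub>R c)" using assms(1) unfolding cone_gen_def by blast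
  have "t *\<^sub>R y = (\<Sum>c\<in>S. (t * a c) *\<^sub>R c)" by (simp add: a(2) scaleR_sum_right)
  moreover have "\<forall>c\<in>S. 0 \<le> t * a c" using a(1) assms(2) by simp
  ultimately show ?thesis unfolding cone_gen_def by (intro CollectI exI[of _ "\<lambda>c. t * a c"]) simp
qed

lemma cone_gen_empty: "cone_gen {} = {0}"
  by (simp add: cone_gen_def)

lemma vertices_finite:
  fixes F :: "(real^'n) set set"
  assumes "is_fan F" shows "finite (vertices F)"
proof (rule inj_on_finite[where f = "\<lambda>c. cone_gen {c}" and B = F])
  show "finite F" using assms by (simp add: is_fan_def)
  show "(\<lambda>c. cone_gen {c}) ` vertices F \<subseteq> F" by (auto simp: vertices_def)
  show "inj_on (\<lambda>c. cone_gen {c}) (vertices F)"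
  proof (rule inj_onI)
    fix c c' assume c: "c \<in> vertices F" and c': "c' \<in> vertices F" and eq: "cone_gen {c} = cone_gen {c'}"
    have mem: "x \<in> cone_gen {x}" for x :: "real^'n"
      unfolding cone_gen_single by (intro exI[of _ 1]) simp
    obtain t where t: "t \<ge> 0" "c' = t *\<^sub>R c" using mem[of c'] eq cone_gen_single by metis
    obtain t' where t': "t' \<ge> 0" "c = t' *\<^sub>R c'" using mem[of c] eq cone_gen_single by metis
    have t1: "t \<ge> 1"
    proof (rule ccontr)
      assume "\<not> t \<ge> 1"
      moreover have "t \<noteq> 0" using t c' by (auto simp: vertices_def)
      ultimately have "0 < t" "t < 1" using t by auto
      then have "t *\<^sub>R c \<notin> lattice" using c by (auto simp: vertices_def)
      then show False using t c' by (auto simp: vertices_def)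
    qed
    have t1': "t' \<ge> 1"
    proof (rule ccontr)
      assume "\<not> t' \<ge> 1"
      moreover have "t' \<noteq> 0" using t' c by (auto simp: vertices_def)
      ultimately have "0 < t'" "t' < 1" using t' by auto
      then have "t' *\<^sub>R c' \<notin> lattice" using c' by (auto simp: vertices_def)
      then show False using t' c by (auto simp: vertices_def)
    qed
    have "c = t' *\<^sub>R (t *\<^sub>R c)" using t(2) t'(2) by metis
    then have "(t' * t) *\<^sub>R c = 1 *\<^sub>R c" by simp
    moreover have "c \<noteq> 0" using c by (simp add: vertices_def)
    ultimately have tt: "t' * t = 1" by (simp only: scaleR_cancel_right) simp
    have "t' * 1 \<le> t' * t" using t1 t'(1) by (intro mult_left_mono) auto
    then have "t' = 1" using tt t1' by simp
    then have "t = 1" using tt by simp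
    then show "c = c'" using t by simp
  qed
qed

lemma zero_face:
  fixes F :: "(real^'n) set set"
  assumes "is_fan F" "complete_fan F" shows "{0} \<in> F"
proof -
  obtain \<sigma> where \<sigma>: "\<sigma> \<in> F" using assms(2) by (auto simp: complete_fan_def)
  then have rc: "rat_cone \<sigma>" using assms(1) by (simp add: is_fan_def)
  then obtain S where S: "\<sigma> = cone_gen S" and pt: "\<sigma> \<inter> uminus ` \<sigma> = {0}" by (auto simp: rat_cone_def)
  have sc: "t *\<^sub>R y \<in> \<sigma>" if "y \<in> \<sigma>" "0 \<le> t" for y t using cone_gen_scale that S by blast
  have z: "0 \<in> \<sigma>" using pt by blast
  have neg0: "a = 0" if "a \<in> \<sigma>" "- a \<in> \<sigma>" for a
  proof -
    have "a \<in> uminus ` \<sigma>" using that(2) by (metis image_eqI minus_minus)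
    then show ?thesis using pt that(1) by blast
  qed
  have "0 extreme_point_of \<sigma>"
    unfolding extreme_point_of_def
  proof (intro conjI ballI z notI)
    fix a b assume a: "a \<in> \<sigma>" and b: "b \<in> \<sigma>" and "(0::real^'n) \<in> open_segment a b"
    then obtain u where ab: "a \<noteq> b" "0 < u" "u < 1" "0 = (1 - u) *\<^sub>R a + u *\<^sub>R b"
      by (auto simp: in_segment)
    have "- a = (u / (1 - u)) *\<^sub>R b"
    proof -
      have eq: "(1 - u) *\<^sub>R a = - (u *\<^sub>R b)" using ab(4) by (simp add: eq_neg_iff_add_eq_0)
      have "a = (1 / (1 - u)) *\<^sub>R ((1 - u) *\<^sub>R a)" using ab(3) by simp
      also have "\<dots> = (1 / (1 - u)) *\<^sub>R (- (u *\<^sub>R b))" by (simp only: eq)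
      finally show ?thesis by simp
    qed
    then have "- a \<in> \<sigma>" using sc[OF b] ab by simp
    then have a0: "a = 0" using neg0 a by blast
    have "- b = ((1 - u) / u) *\<^sub>R a"
    proof -
      have eq: "u *\<^sub>R b = - ((1 - u) *\<^sub>R a)" using ab(4) by (simp add: eq_neg_iff_add_eq_0 add.commute)
      have "b = (1 / u) *\<^sub>R (u *\<^sub>R b)" using ab(2) by simp
      also have "\<dots> = (1 / u) *\<^sub>R (- ((1 - u) *\<^sub>R a))" by (simp only: eq)
      finally show ?thesis by simp
    qed
    then have "- b \<in> \<sigma>" using sc[OF a] ab by simp
    then have "b = 0" using neg0 b by blast
    then show False using a0 ab(1) by simp
  qed
  then have "{0} face_of \<sigma>" by (simp add: face_of_singleton)
  then show ?thesis using assms(1) \<sigma> by (auto simp: is_fan_def)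
qed

theorem proposition3p1:
  fixes F :: "(real^'n) set set"
  assumes "smooth_fan F" and "projective_fan F"
  shows "unit_elt \<in> DF_cocycles F 0 \<and> unit_elt \<notin> DF_coboundaries F 0
         \<and> (\<forall>a\<in>DF_cocycles F 0. \<exists>q::rat. a - scal q unit_elt \<in> DF_coboundaries F 0)
         \<and> (\<forall>i>0. DF_cocycles F i \<subseteq> DF_coboundaries F i)"
proof (rule main_generic)
  have fan: "is_fan F" using assms(1) by (simp add: smooth_fan_def)
  have cf: "complete_fan F" using assms(2) by (simp add: projective_fan_def)
  show fin: "finite (vertices F)" using vertices_finite[OF fan] .
  have "\<exists>r::real^'n \<Rightarrow> nat. inj_on r (vertices F)"
    using finite_imp_inj_to_nat_seg[OF fin] by blast
  then show "inj_on (fan_rank F) (vertices F)"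
    unfolding fan_rank_def by (rule someI_ex)
  show "fan_face F {}" using zero_face[OF fan cf] by (simp add: fan_face_def cone_gen_empty)
qed

end
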